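(* Let $G=(V,E)$ be a directed acyclic graph under the LT model with edge weights $w$ satisfying $\sum_{x\in\mathrm{In}(v)}w_{(x,v)}\le1$ for every $v\in V$, and let $L$ be the length of a longest directed path in $G$. Taking $p_{(x,y)}=w_{(x,y)}$ in the EaSyIM recursion, for every $l\ge L$ and every $u\in V$ the EaSyIM score satisfies $\Delta^l(u)=\sigma(\{u\})$; equivalently, $\sigma(\{u\})=\sum_{\rho}\prod_{e\in\rho}w_e$, the sum ranging over all directed paths $\rho$ of length at least $1$ starting at $u$.
   Context: LT model: each node $v$ draws a threshold $\theta_v$ uniformly from $[0,1]$; seeds are active initially, and an inactive $v$ becomes active once $\sum_{u\in\mathrm{In}(v),\,u\text{ active}}w_{(u,v)}\ge\theta_v$; active nodes stay active. $\sigma(S)$ denotes the expected number of active nodes at the end of the process that are not in $S$. EaSyIM score: $\Delta^0(u)=0$ for all $u$, and for $i\ge1$, $\Delta^i(u)=\sum_{v\in\mathrm{Out}(u)}p_{(u,v)}\big(1+\Delta^{i-1}(v)\big)$, where $\mathrm{Out}(u)$ is the set of out-neighbours of $u$ and $\mathrm{In}(v)$ the set of in-neighbours of $v$. *)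

theory Defs
  imports "HOL-Probability.Probability"
begin

definition In_nbrs :: "('a \<times> 'a) set \<Rightarrow> 'a \<Rightarrow> 'a set" where
  "In_nbrs E v = {x. (x, v) \<in> E}"

definition Out_nbrs :: "('a \<times> 'a) set \<Rightarrow> 'a \<Rightarrow> 'a set" where
  "Out_nbrs E u = {y. (u, y) \<in> E}"

definition lt_step :: "'a set \<Rightarrow> ('a \<times> 'a) set \<Rightarrow> ('a \<times> 'a \<Rightarrow> real)
    \<Rightarrow> ('a \<Rightarrow> real) \<Rightarrow> 'a set \<Rightarrow> 'a set" where
  "lt_step V E w \<theta> A =
     A \<union> {v \<in> V. (\<Sum>u \<in> In_nbrs E v \<inter> A. w (u, v)) \<ge> \<theta> v}"

definition lt_final :: "'a set \<Rightarrow> ('a \<times> 'a) set \<Rightarrow> ('a \<times> 'a \<Rightarrow> real)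
    \<Rightarrow> 'a set \<Rightarrow> ('a \<Rightarrow> real) \<Rightarrow> 'a set" where
  "lt_final V E w S \<theta> = (\<Union>t. (lt_step V E w \<theta> ^^ t) S)"

definition threshold_space :: "'a set \<Rightarrow> ('a \<Rightarrow> real) measure" where
  "threshold_space V = PiM V (\<lambda>_. uniform_measure lborel {0..1::real})"

definition lt_sigma :: "'a set \<Rightarrow> ('a \<times> 'a) set \<Rightarrow> ('a \<times> 'a \<Rightarrow> real)
    \<Rightarrow> 'a set \<Rightarrow> real" where
  "lt_sigma V E w S =
     (\<integral>\<theta>. real (card (lt_final V E w S \<theta> - S)) \<partial>threshold_space V)"

primrec easyim :: "('a \<times> 'a) set \<Rightarrow> ('a \<times> 'a \<Rightarrow> real) \<Rightarrow> nat \<Rightarrow> 'a \<Rightarrow> real" where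
  "easyim E p 0 u = 0"
| "easyim E p (Suc i) u = (\<Sum>v \<in> Out_nbrs E u. p (u, v) * (1 + easyim E p i v))"

definition dpath :: "('a \<times> 'a) set \<Rightarrow> 'a list \<Rightarrow> bool" where
  "dpath E xs \<longleftrightarrow> xs \<noteq> [] \<and> (\<forall>i. Suc i < length xs \<longrightarrow> (xs ! i, xs ! Suc i) \<in> E)"

definition longest_path_length :: "('a \<times> 'a) set \<Rightarrow> nat" where
  "longest_path_length E = Max {length xs - 1 | xs. dpath E xs}"

definition path_weight :: "('a \<times> 'a \<Rightarrow> real) \<Rightarrow> 'a list \<Rightarrow> real" where
  "path_weight w xs = (\<Prod>i < length xs - 1. w (xs ! i, xs ! Suc i))"

end

theory Submission
  imports Defs
begin


locale ltm =
  fixes V :: "'a set" and E :: "('a \<times> 'a) set" and w :: "'a \<times> 'a \<Rightarrow> real" and u :: 'a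
  assumes finV: "finite V"
    and EV: "E \<subseteq> V \<times> V"
    and dag: "acyclic E"
    and w_nonneg: "\<And>e. e \<in> E \<Longrightarrow> w e \<ge> 0"
    and w_in: "\<And>v. v \<in> V \<Longrightarrow> (\<Sum>x \<in> In_nbrs E v. w (x, v)) \<le> 1"
    and u: "u \<in> V"
begin

abbreviation "step \<theta> \<equiv> lt_step V E w \<theta>"
abbreviation "A t \<theta> \<equiv> (step \<theta> ^^ t) {u}"
abbreviation "F \<theta> \<equiv> lt_final V E w {u} \<theta>"

lemma finE: "finite E" using finV EV finite_subset by blast

lemma fin_In: "finite (In_nbrs E v)"
proof -
  have "In_nbrs E v \<subseteq> fst ` E" unfolding In_nbrs_def by force
  thus ?thesis using finE finite_subset by blast
qed

lemma In_sub: "In_nbrs E v \<subseteq> V" using EV unfolding In_nbrs_def by auto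

lemma mem_step: "x \<in> step \<theta> B \<longleftrightarrow> x \<in> B \<or> (x \<in> V \<and> \<theta> x \<le> (\<Sum>y \<in> In_nbrs E x \<inter> B. w (y, x)))"
  unfolding lt_step_def by auto

lemma A_Suc: "A (Suc t) \<theta> = step \<theta> (A t \<theta>)" by simp

lemma step_infl: "B \<subseteq> step \<theta> B" unfolding lt_step_def by auto

lemma A_mono: "t \<le> s \<Longrightarrow> A t \<theta> \<subseteq> A s \<theta>"
proof (induction s)
  case 0 then show ?case by simp
next
  case (Suc s)
  then show ?case using step_infl[of "A s \<theta>" \<theta>] by (cases "t = Suc s") auto
qed

lemma A_F: "A t \<theta> \<subseteq> F \<theta>" unfolding lt_final_def by blast

lemma F_V: "F \<theta> \<subseteq> V"
proof -
  have "A t \<theta> \<subseteq> V" for t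
    by (induction t) (use u in \<open>auto simp: lt_step_def\<close>)
  thus ?thesis unfolding lt_final_def by blast
qed

lemma sum_mono_In: "B \<subseteq> C \<Longrightarrow> (\<Sum>y \<in> In_nbrs E x \<inter> B. w (y, x)) \<le> (\<Sum>y \<in> In_nbrs E x \<inter> C. w (y, x))"
  by (rule sum_mono2) (use fin_In w_nonneg in \<open>auto simp: In_nbrs_def\<close>)

lemma fin_chain: "finite B \<Longrightarrow> B \<subseteq> F \<theta> \<Longrightarrow> \<exists>t. B \<subseteq> A t \<theta>"
proof (induction B rule: finite_induct)
  case empty then show ?case by auto
next
  case (insert x B)
  then obtain t where t: "B \<subseteq> A t \<theta>" by auto
  from insert obtain s where s: "x \<in> A s \<theta>" unfolding lt_final_def by auto
  have "B \<subseteq> A (max t s) \<theta>" "x \<in> A (max t s) \<theta>" using t s A_mono[of t "max t s" \<theta>] A_mono[of s "max t s" \<theta>] by auto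
  then show ?case by blast
qed

lemma char: "x \<in> F \<theta> \<longleftrightarrow> x = u \<or> (x \<in> V \<and> \<theta> x \<le> (\<Sum>y \<in> In_nbrs E x \<inter> F \<theta>. w (y, x)))"
proof
  assume "x \<in> F \<theta>"
  then obtain t where "x \<in> A t \<theta>" unfolding lt_final_def by auto
  then show "x = u \<or> (x \<in> V \<and> \<theta> x \<le> (\<Sum>y \<in> In_nbrs E x \<inter> F \<theta>. w (y, x)))"
  proof (induction t)
    case 0 then show ?case by simp
  next
    case (Suc t)
    show ?case
    proof (cases "x \<in> A t \<theta>")
      case True then show ?thesis using Suc by blast
    next
      case False
      then have "x \<in> V" "\<theta> x \<le> (\<Sum>y \<in> In_nbrs E x \<inter> A t \<theta>. w (y, x))"
        using Suc.prems unfolding A_Suc mem_step by auto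
      then show ?thesis using sum_mono_In[OF A_F[of t \<theta>], of x] by auto
    qed
  qed
next
  assume h: "x = u \<or> (x \<in> V \<and> \<theta> x \<le> (\<Sum>y \<in> In_nbrs E x \<inter> F \<theta>. w (y, x)))"
  show "x \<in> F \<theta>"
  proof (cases "x = u")
    case True then show ?thesis using A_F[of 0 \<theta>] by auto
  next
    case False
    have "finite (In_nbrs E x \<inter> F \<theta>)" using fin_In by auto
    then obtain t where t: "In_nbrs E x \<inter> F \<theta> \<subseteq> A t \<theta>" using fin_chain by blast
    have eq: "In_nbrs E x \<inter> F \<theta> = In_nbrs E x \<inter> A t \<theta>" using t A_F[of t \<theta>] by blast
    have "x \<in> A (Suc t) \<theta>" unfolding A_Suc mem_step using h False eq by auto
    then show ?thesis using A_F by blast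
  qed
qed

lemma wfE: "wf E" using finite_acyclic_wf[OF finE dag] .

lemma local: "(\<And>y. (y, x) \<in> E\<^sup>* \<Longrightarrow> \<theta>1 y = \<theta>2 y) \<Longrightarrow> (x \<in> F \<theta>1 \<longleftrightarrow> x \<in> F \<theta>2)"
proof (induction x rule: wf_induct_rule[OF wfE])
  case (1 x)
  have "In_nbrs E x \<inter> F \<theta>1 = In_nbrs E x \<inter> F \<theta>2"
  proof -
    have "y \<in> F \<theta>1 \<longleftrightarrow> y \<in> F \<theta>2" if "y \<in> In_nbrs E x" for y
    proof (rule 1(1))
      show "(y, x) \<in> E" using that by (simp add: In_nbrs_def)
      fix z assume "(z, y) \<in> E\<^sup>*"
      then have "(z, x) \<in> E\<^sup>*" using \<open>(y, x) \<in> E\<close> by (meson rtrancl.rtrancl_into_rtrancl)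
      then show "\<theta>1 z = \<theta>2 z" using 1(2) by blast
    qed
    then show ?thesis by blast
  qed
  moreover have "\<theta>1 x = \<theta>2 x" using 1(2) by blast
  ultimately show ?case by (subst (1 2) char) simp
qed

lemma local_upd: "(x, v) \<in> E \<Longrightarrow> (x \<in> F (\<theta>(v := y)) \<longleftrightarrow> x \<in> F \<theta>)"
proof (rule local)
  fix z assume xv: "(x, v) \<in> E" and "(z, x) \<in> E\<^sup>*"
  have "z \<noteq> v"
  proof
    assume "z = v"
    then have "(v, v) \<in> E\<^sup>+" using \<open>(z, x) \<in> E\<^sup>*\<close> xv by (meson rtrancl_into_trancl1)
    then show False using dag unfolding acyclic_def by blast
  qed
  then show "(\<theta>(v := y)) z = \<theta> z" by simp
qed

end


lemma dpath_Cons: "dpath E (x # ys) \<longleftrightarrow> ys = [] \<or> ((x, hd ys) \<in> E \<and> dpath E ys)"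
proof (cases ys)
  case Nil then show ?thesis by (simp add: dpath_def)
next
  case (Cons y zs)
  show ?thesis
  proof
    assume h: "dpath E (x # ys)"
    have "(x, hd ys) \<in> E" using h Cons unfolding dpath_def by (metis length_Cons nth_Cons_0 nth_Cons_Suc zero_less_Suc Suc_less_eq list.sel(1))
    moreover have "dpath E ys" using h Cons unfolding dpath_def
      by (metis (no_types, lifting) Suc_less_eq length_Cons list.distinct(1) nth_Cons_Suc)
    ultimately show "ys = [] \<or> ((x, hd ys) \<in> E \<and> dpath E ys)" by blast
  next
    assume "ys = [] \<or> ((x, hd ys) \<in> E \<and> dpath E ys)"
    then have h: "(x, y) \<in> E" "dpath E ys" using Cons by auto
    show "dpath E (x # ys)" unfolding dpath_def
    proof (intro conjI allI impI)
      fix i assume "Suc i < length (x # ys)"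
      then show "((x # ys) ! i, (x # ys) ! Suc i) \<in> E"
        using h Cons unfolding dpath_def by (cases i) auto
    qed simp
  qed
qed

lemma dpath_snoc: "dpath E (xs @ [v]) \<longleftrightarrow> xs = [] \<or> (dpath E xs \<and> (last xs, v) \<in> E)"
proof (induction xs)
  case Nil then show ?case by (simp add: dpath_def)
next
  case (Cons x xs)
  show ?case
    by (cases xs) (use Cons in \<open>auto simp: dpath_Cons\<close>)
qed

lemma path_weight_Cons: "ys \<noteq> [] \<Longrightarrow> path_weight w (x # ys) = w (x, hd ys) * path_weight w ys"
  unfolding path_weight_def
  by (cases ys) (simp_all add: prod.lessThan_Suc_shift del: prod.lessThan_Suc)

lemma path_weight_snoc: "xs \<noteq> [] \<Longrightarrow> path_weight w (xs @ [v]) = path_weight w xs * w (last xs, v)"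
proof -
  assume "xs \<noteq> []"
  then obtain n where n: "length xs = Suc n" by (cases xs) auto
  have "path_weight w (xs @ [v]) = (\<Prod>i < Suc n. w ((xs@[v]) ! i, (xs@[v]) ! Suc i))"
    unfolding path_weight_def using n by simp
  also have "\<dots> = (\<Prod>i < n. w ((xs@[v]) ! i, (xs@[v]) ! Suc i)) * w ((xs@[v]) ! n, (xs@[v]) ! Suc n)"
    by simp
  also have "(\<Prod>i < n. w ((xs@[v]) ! i, (xs@[v]) ! Suc i)) = path_weight w xs"
    unfolding path_weight_def using n by (auto simp: nth_append intro!: prod.cong)
  also have "(xs@[v]) ! n = last xs" using n \<open>xs \<noteq> []\<close> by (simp add: nth_append last_conv_nth)
  also have "(xs@[v]) ! Suc n = v" using n by (simp add: nth_append)
  finally show ?thesis .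
qed

lemma dpath_single[simp]: "dpath E [x]" by (simp add: dpath_def)

lemma path_weight_single[simp]: "path_weight w [x] = 1" by (simp add: path_weight_def)

context ltm begin

lemma dpath_trancl: "dpath E xs \<Longrightarrow> i < j \<Longrightarrow> j < length xs \<Longrightarrow> (xs ! i, xs ! j) \<in> E\<^sup>+"
proof (induction j)
  case 0 then show ?case by simp
next
  case (Suc j)
  have e: "(xs ! j, xs ! Suc j) \<in> E" using Suc.prems unfolding dpath_def by blast
  show ?case
  proof (cases "i = j")
    case True then show ?thesis using e by auto
  next
    case False
    then have "(xs ! i, xs ! j) \<in> E\<^sup>+" using Suc by auto
    then show ?thesis using e by auto
  qed
qed

lemma dpath_distinct: "dpath E xs \<Longrightarrow> distinct xs"
proof (subst distinct_conv_nth, intro allI impI)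
  fix i j assume d: "dpath E xs" and ij: "i < length xs" "j < length xs" "i \<noteq> j"
  show "xs ! i \<noteq> xs ! j"
  proof
    assume eq: "xs ! i = xs ! j"
    have "(xs ! min i j, xs ! max i j) \<in> E\<^sup>+" using dpath_trancl[OF d, of "min i j" "max i j"] ij
      by (simp add: min_def max_def)
    then show False using eq dag unfolding acyclic_def by (metis max_def min_def)
  qed
qed

lemma dpath_set: "dpath E xs \<Longrightarrow> length xs \<ge> 2 \<Longrightarrow> set xs \<subseteq> V"
proof
  fix x assume d: "dpath E xs" and l: "length xs \<ge> 2" and "x \<in> set xs"
  then obtain i where i: "i < length xs" "xs ! i = x" by (auto simp: in_set_conv_nth)
  show "x \<in> V"
  proof (cases "Suc i < length xs")
    case True then show ?thesis using d i EV unfolding dpath_def by blast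
  next
    case False
    have si: "Suc (i - 1) = i" using False l i by auto
    then have "Suc (i - 1) < length xs" using i by simp
    then have "(xs ! (i - 1), xs ! Suc (i - 1)) \<in> E" using d unfolding dpath_def by blast
    then show ?thesis using EV i si by auto
  qed
qed

definition D2 where "D2 = {xs. dpath E xs \<and> length xs \<ge> 2}"

lemma fin_D2: "finite D2"
proof (rule finite_subset)
  show "D2 \<subseteq> {xs. set xs \<subseteq> V \<and> length xs \<le> card V}"
  proof
    fix xs assume "xs \<in> D2"
    then have d: "dpath E xs" "length xs \<ge> 2" by (auto simp: D2_def)
    then have s: "set xs \<subseteq> V" by (rule dpath_set)
    have "length xs = card (set xs)" using dpath_distinct[OF d(1)] by (simp add: distinct_card)
    also have "\<dots> \<le> card V" using s finV by (simp add: card_mono)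
    finally show "xs \<in> {xs. set xs \<subseteq> V \<and> length xs \<le> card V}" using s by simp
  qed
  show "finite {xs. set xs \<subseteq> V \<and> length xs \<le> card V}" using finite_lists_length_le[OF finV] .
qed

lemma len_le_L: "dpath E xs \<Longrightarrow> length xs - 1 \<le> longest_path_length E"
proof -
  assume d: "dpath E xs"
  have "{length xs - 1 | xs. dpath E xs} \<subseteq> {0..card V}"
  proof
    fix n assume "n \<in> {length xs - 1 | xs. dpath E xs}"
    then obtain ys where ys: "n = length ys - 1" "dpath E ys" by auto
    show "n \<in> {0..card V}"
    proof (cases "length ys \<ge> 2")
      case True
      then have "ys \<in> D2" using ys by (simp add: D2_def)
      have "length ys = card (set ys)" using dpath_distinct[OF ys(2)] by (simp add: distinct_card)
      also have "\<dots> \<le> card V" using dpath_set[OF ys(2) True] finV by (simp add: card_mono)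
      finally show ?thesis using ys by simp
    next
      case False then show ?thesis using ys by simp
    qed
  qed
  then have "finite {length xs - 1 | xs. dpath E xs}" using finite_subset by blast
  then show ?thesis unfolding longest_path_length_def using d by (intro Max_ge) auto
qed

definition P where "P v = {xs. dpath E xs \<and> hd xs = u \<and> last xs = v}"
definition Q where "Q x = {xs. dpath E xs \<and> hd xs = x \<and> length xs \<ge> 2}"
definition Qk where "Qk x k = {xs. dpath E xs \<and> hd xs = x \<and> length xs \<ge> 2 \<and> length xs \<le> Suc k}"

lemma hd_last_len: "dpath E xs \<Longrightarrow> hd xs = last xs \<Longrightarrow> length xs = 1"
proof (rule ccontr)
  assume d: "dpath E xs" and hl: "hd xs = last xs" and "length xs \<noteq> 1"
  moreover have "xs \<noteq> []" using d by (simp add: dpath_def)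
  ultimately have l: "length xs \<ge> 2" by (cases xs; cases "tl xs") auto
  have "(xs ! 0, xs ! (length xs - 1)) \<in> E\<^sup>+" using dpath_trancl[OF d, of 0 "length xs - 1"] l by auto
  moreover have "xs \<noteq> []" using l by auto
  then have "xs ! 0 = xs ! (length xs - 1)" using hl by (simp add: hd_conv_nth last_conv_nth)
  ultimately show False using dag unfolding acyclic_def by metis
qed

lemma P_u: "P u = {[u]}"
proof
  show "P u \<subseteq> {[u]}"
  proof
    fix xs assume "xs \<in> P u"
    then have "dpath E xs" "hd xs = u" "last xs = u" by (auto simp: P_def)
    then have "length xs = 1" using hd_last_len by auto
    then show "xs \<in> {[u]}" using \<open>hd xs = u\<close> by (cases xs) auto
  qed
qed (auto simp: P_def dpath_def)

lemma fin_P: "finite (P v)"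
proof (rule finite_subset)
  show "P v \<subseteq> {[u]} \<union> D2"
  proof
    fix xs assume "xs \<in> P v"
    then have d: "dpath E xs" "hd xs = u" by (auto simp: P_def)
    show "xs \<in> {[u]} \<union> D2"
    proof (cases "length xs \<ge> 2")
      case True then show ?thesis using d by (simp add: D2_def)
    next
      case False
      have "xs \<noteq> []" using d by (simp add: dpath_def)
      then have "length xs = 1" using False by (cases xs; cases "tl xs") auto
      then show ?thesis using d by (cases xs) auto
    qed
  qed
qed (use fin_D2 in auto)

definition N where "N v = (\<Sum>xs \<in> P v. path_weight w xs)"

lemma N_u: "N u = 1" by (simp add: N_def P_u)

lemma N_rec: assumes v: "v \<noteq> u" shows "N v = (\<Sum>y \<in> In_nbrs E v. w (y, v) * N y)"
proof -
  have "(\<Sum>y \<in> In_nbrs E v. w (y, v) * N y) = (\<Sum>y \<in> In_nbrs E v. \<Sum>xs \<in> P y. path_weight w (xs @ [v]))"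
  proof (rule sum.cong[OF refl])
    fix y assume "y \<in> In_nbrs E v"
    have "w (y, v) * N y = (\<Sum>xs \<in> P y. path_weight w xs * w (y, v))"
      unfolding N_def by (simp add: sum_distrib_left mult.commute)
    also have "\<dots> = (\<Sum>xs \<in> P y. path_weight w (xs @ [v]))"
    proof (rule sum.cong[OF refl])
      fix xs assume "xs \<in> P y"
      then have "xs \<noteq> []" "last xs = y" by (auto simp: P_def dpath_def)
      then show "path_weight w xs * w (y, v) = path_weight w (xs @ [v])" by (simp add: path_weight_snoc)
    qed
    finally show "w (y, v) * N y = (\<Sum>xs \<in> P y. path_weight w (xs @ [v]))" .
  qed
  also have "\<dots> = (\<Sum>(y, xs) \<in> Sigma (In_nbrs E v) P. path_weight w (xs @ [v]))"
    by (rule sum.Sigma) (use fin_In fin_P in auto)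
  also have "\<dots> = (\<Sum>zs \<in> (\<lambda>(y, xs). xs @ [v]) ` Sigma (In_nbrs E v) P. path_weight w zs)"
    by (subst sum.reindex) (auto simp: inj_on_def P_def case_prod_beta comp_def)
  also have "(\<lambda>(y, xs). xs @ [v]) ` Sigma (In_nbrs E v) P = P v"
  proof
    show "(\<lambda>(y, xs). xs @ [v]) ` Sigma (In_nbrs E v) P \<subseteq> P v"
    proof clarsimp
      fix y xs assume h: "y \<in> In_nbrs E v" "xs \<in> P y"
      then have "xs \<noteq> []" by (auto simp: P_def dpath_def)
      then show "xs @ [v] \<in> P v"
        using h by (auto simp: P_def dpath_snoc In_nbrs_def)
    qed
    show "P v \<subseteq> (\<lambda>(y, xs). xs @ [v]) ` Sigma (In_nbrs E v) P"
    proof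
      fix zs assume z: "zs \<in> P v"
      then have d: "dpath E zs" "hd zs = u" "last zs = v" by (auto simp: P_def)
      have "zs \<noteq> []" using d by (auto simp: dpath_def)
      have "length zs \<noteq> 1" using d v by (cases zs) auto
      then have bn: "butlast zs \<noteq> []" using \<open>zs \<noteq> []\<close> by (cases zs) auto
      have zeq: "zs = butlast zs @ [v]" using \<open>zs \<noteq> []\<close> d by (metis append_butlast_last_id)
      have "dpath E (butlast zs) \<and> (last (butlast zs), v) \<in> E"
        using d(1) bn by (subst (asm) zeq) (simp add: dpath_snoc)
      moreover have "hd (butlast zs) = u" using d bn by (metis hd_append2 zeq)
      ultimately have "(last (butlast zs), butlast zs) \<in> Sigma (In_nbrs E v) P"
        by (auto simp: P_def In_nbrs_def)
      then show "zs \<in> (\<lambda>(y, xs). xs @ [v]) ` Sigma (In_nbrs E v) P"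
        using zeq by force
    qed
  qed
  finally show ?thesis by (simp add: N_def)
qed

lemma Qk_0: "Qk x 0 = {}" by (auto simp: Qk_def)

lemma fin_Qk: "finite (Qk x k)" by (rule finite_subset[OF _ fin_D2]) (auto simp: Qk_def D2_def)

lemma easyim_Qk: "easyim E w k x = (\<Sum>xs \<in> Qk x k. path_weight w xs)"
proof (induction k arbitrary: x)
  case 0 then show ?case by (simp add: Qk_0)
next
  case (Suc k)
  have finO: "finite (Out_nbrs E x)"
  proof -
    have "Out_nbrs E x \<subseteq> snd ` E" unfolding Out_nbrs_def by force
    thus ?thesis using finE finite_subset by blast
  qed
  let ?S = "\<lambda>v. insert [v] (Qk v k)"
  have "easyim E w (Suc k) x = (\<Sum>v \<in> Out_nbrs E x. \<Sum>ys \<in> ?S v. path_weight w (x # ys))"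
  proof (simp only: easyim.simps, rule sum.cong[OF refl])
    fix v assume "v \<in> Out_nbrs E x"
    have nin: "[v] \<notin> Qk v k" by (auto simp: Qk_def)
    have "(\<Sum>ys \<in> ?S v. path_weight w (x # ys)) = w (x, v) + (\<Sum>ys \<in> Qk v k. path_weight w (x # ys))"
      using nin fin_Qk by (simp add: path_weight_Cons)
    also have "(\<Sum>ys \<in> Qk v k. path_weight w (x # ys)) = (\<Sum>ys \<in> Qk v k. w (x, v) * path_weight w ys)"
    proof (rule sum.cong[OF refl])
      fix ys assume "ys \<in> Qk v k"
      then have "ys \<noteq> []" "hd ys = v" by (auto simp: Qk_def)
      then show "path_weight w (x # ys) = w (x, v) * path_weight w ys" by (simp add: path_weight_Cons)
    qed
    finally show "w (x, v) * (1 + easyim E w k v) = (\<Sum>ys \<in> ?S v. path_weight w (x # ys))"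
      by (simp add: Suc sum_distrib_left algebra_simps)
  qed
  also have "\<dots> = (\<Sum>(v, ys) \<in> Sigma (Out_nbrs E x) ?S. path_weight w (x # ys))"
    by (rule sum.Sigma) (use finO fin_Qk in auto)
  also have "\<dots> = (\<Sum>zs \<in> (\<lambda>(v, ys). x # ys) ` Sigma (Out_nbrs E x) ?S. path_weight w zs)"
    by (subst sum.reindex) (auto simp: inj_on_def Qk_def case_prod_beta comp_def)
  also have "(\<lambda>(v, ys). x # ys) ` Sigma (Out_nbrs E x) ?S = Qk x (Suc k)"
  proof
    show "(\<lambda>(v, ys). x # ys) ` Sigma (Out_nbrs E x) ?S \<subseteq> Qk x (Suc k)"
      by (auto simp: Qk_def dpath_Cons Out_nbrs_def)
    show "Qk x (Suc k) \<subseteq> (\<lambda>(v, ys). x # ys) ` Sigma (Out_nbrs E x) ?S"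
    proof
      fix zs assume z: "zs \<in> Qk x (Suc k)"
      then obtain ys where zs: "zs = x # ys" "ys \<noteq> []"
        by (cases zs) (auto simp: Qk_def Suc_le_eq)
      have d: "(x, hd ys) \<in> E" "dpath E ys" "length ys \<le> Suc k"
        using z zs by (auto simp: Qk_def dpath_Cons)
      have "ys \<in> ?S (hd ys)"
      proof (cases "length ys \<ge> 2")
        case True then show ?thesis using d by (simp add: Qk_def)
      next
        case False then have "length ys = 1" using zs by (cases ys) (auto simp: Suc_le_eq)
        then show ?thesis by (cases ys) auto
      qed
      then have "(hd ys, ys) \<in> Sigma (Out_nbrs E x) ?S" using d by (simp add: Out_nbrs_def)
      then show "zs \<in> (\<lambda>(v, ys). x # ys) ` Sigma (Out_nbrs E x) ?S" using zs by force
    qed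
  qed
  finally show ?case .
qed

lemma Qk_Q: "k \<ge> longest_path_length E \<Longrightarrow> Qk x k = Q x"
  unfolding Qk_def Q_def using len_le_L by fastforce

lemma Q_sum: "(\<Sum>xs \<in> Q u. path_weight w xs) = (\<Sum>v \<in> V - {u}. N v)"
proof -
  have finQ: "finite (Q u)" by (rule finite_subset[OF _ fin_D2]) (auto simp: Q_def D2_def)
  have img: "last ` Q u \<subseteq> V - {u}"
  proof
    fix y assume "y \<in> last ` Q u"
    then obtain xs where xs: "xs \<in> Q u" "y = last xs" by auto
    then have d: "dpath E xs" "hd xs = u" "length xs \<ge> 2" by (auto simp: Q_def)
    have "xs \<noteq> []" using d(3) by auto
    then have "y \<in> set xs" using xs by auto
    then have "y \<in> V" using dpath_set[OF d(1) d(3)] by auto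
    moreover have "y \<noteq> u" using hd_last_len[OF d(1)] d xs by auto
    ultimately show "y \<in> V - {u}" by simp
  qed
  have "(\<Sum>xs \<in> Q u. path_weight w xs) = (\<Sum>v \<in> V - {u}. \<Sum>xs \<in> {xs \<in> Q u. last xs = v}. path_weight w xs)"
    by (rule sum.group[OF finQ finV[THEN finite_Diff] img, symmetric])
  also have "\<dots> = (\<Sum>v \<in> V - {u}. N v)"
  proof (rule sum.cong[OF refl])
    fix v assume v: "v \<in> V - {u}"
    have "{xs \<in> Q u. last xs = v} = P v"
    proof
      show "{xs \<in> Q u. last xs = v} \<subseteq> P v" by (auto simp: Q_def P_def)
      show "P v \<subseteq> {xs \<in> Q u. last xs = v}"
      proof
        fix xs assume "xs \<in> P v"
        then have d: "dpath E xs" "hd xs = u" "last xs = v" by (auto simp: P_def)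
        have "length xs \<noteq> 1" using d v by (cases xs) auto
        moreover have "xs \<noteq> []" using d by (auto simp: dpath_def)
        ultimately have "length xs \<ge> 2" by (cases xs) (auto simp: Suc_le_eq)
        then show "xs \<in> {xs \<in> Q u. last xs = v}" using d by (simp add: Q_def)
      qed
    qed
    then show "(\<Sum>xs \<in> {xs \<in> Q u. last xs = v}. path_weight w xs) = N v" by (simp add: N_def)
  qed
  finally show ?thesis .
qed

end


abbreviation "U \<equiv> uniform_measure lborel {0..1::real}"

lemma probU: "prob_space U"
  by (rule prob_space_uniform_measure) auto

lemma comp_meas: "(\<lambda>\<theta>. \<theta> z) \<in> borel_measurable (PiM I (\<lambda>_. U))"
proof (cases "z \<in> I")
  case True
  have "(\<lambda>\<theta>. \<theta> z) \<in> measurable (PiM I (\<lambda>_. U)) U" using True by measurable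
  then show ?thesis by (simp add: measurable_def)
next
  case False
  have "(\<lambda>\<theta>::'a \<Rightarrow> real. undefined::real) \<in> borel_measurable (PiM I (\<lambda>_. U))" by simp
  then show ?thesis
    by (rule measurable_cong[THEN iffD1, rotated]) (use False in \<open>auto simp: space_PiM\<close>)
qed

context ltm begin

lemma mem_A_Suc: "x \<in> A (Suc t) \<theta> \<longleftrightarrow> x \<in> A t \<theta> \<or> (x \<in> V \<and> \<theta> x \<le> (\<Sum>y \<in> In_nbrs E x. if y \<in> A t \<theta> then w (y, x) else 0))"
  unfolding A_Suc mem_step by (simp add: sum.inter_restrict[OF fin_In] Int_commute)

lemma meas_A: "Measurable.pred (PiM I (\<lambda>_. U)) (\<lambda>\<theta>. x \<in> A t \<theta>)"
proof (induction t arbitrary: x)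
  case 0 then show ?case by simp
next
  case (Suc t)
  note [measurable] = Suc comp_meas
  have s: "(\<lambda>\<theta>. (\<Sum>y \<in> In_nbrs E x. if y \<in> A t \<theta> then w (y, x) else 0)) \<in> borel_measurable (PiM I (\<lambda>_. U))"
    by (intro borel_measurable_sum measurable_If) (auto intro: Suc)
  have "Measurable.pred (PiM I (\<lambda>_. U)) (\<lambda>\<theta>. \<theta> x \<le> (\<Sum>y \<in> In_nbrs E x. if y \<in> A t \<theta> then w (y, x) else 0))"
    unfolding pred_def using comp_meas[of x I] s by (rule borel_measurable_le)
  then show ?case unfolding mem_A_Suc using Suc by measurable
qed

lemma meas_F: "Measurable.pred (PiM I (\<lambda>_. U)) (\<lambda>\<theta>. x \<in> F \<theta>)"
proof -
  note [measurable] = meas_A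
  have "(\<lambda>\<theta>. x \<in> F \<theta>) = (\<lambda>\<theta>. \<exists>t::nat. x \<in> A t \<theta>)" unfolding lt_final_def by auto
  then show ?thesis by simp
qed

end


lemma psU: "product_sigma_finite (\<lambda>_. U)"
  unfolding product_sigma_finite_def using probU prob_space_imp_sigma_finite by blast

lemma nn_insert_indep:
  assumes "finite I" "v \<notin> I" and g: "g \<in> borel_measurable (PiM (insert v I) (\<lambda>_. U))"
    and ind: "\<And>\<theta> y. g (\<theta>(v := y)) = g \<theta>"
  shows "integral\<^sup>N (PiM (insert v I) (\<lambda>_. U)) g = integral\<^sup>N (PiM I (\<lambda>_. U)) g"
proof -
  have "integral\<^sup>N (PiM (insert v I) (\<lambda>_. U)) g = (\<integral>\<^sup>+ x. (\<integral>\<^sup>+ y. g (x(v := y)) \<partial>U) \<partial>(PiM I (\<lambda>_. U)))"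
    by (rule product_sigma_finite.product_nn_integral_insert[OF psU assms(1,2) g])
  also have "\<dots> = (\<integral>\<^sup>+ x. g x \<partial>(PiM I (\<lambda>_. U)))"
    using prob_space.emeasure_space_1[OF probU] by (simp add: ind)
  finally show ?thesis .
qed

context ltm begin

abbreviation "MV \<equiv> PiM V (\<lambda>_. U)"

definition a where "a x = measure MV {\<theta> \<in> space MV. x \<in> F \<theta>}"

lemma probMV: "prob_space MV" by (rule prob_space_PiM) (rule probU)

lemma sets_F: "{\<theta> \<in> space (PiM I (\<lambda>_. U)). x \<in> F \<theta>} \<in> sets (PiM I (\<lambda>_. U))"
  by (rule predE) (rule meas_F)

lemma ind_meas: "(\<lambda>\<theta>. indicator {\<theta>. x \<in> F \<theta>} \<theta> :: ennreal) \<in> borel_measurable (PiM I (\<lambda>_. U))"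
proof -
  have "(\<lambda>\<theta>. indicator {\<theta>. x \<in> F \<theta>} \<theta> :: ennreal) = (\<lambda>\<theta>. if x \<in> F \<theta> then 1 else 0)"
    by (auto simp: indicator_def)
  also have "\<dots> \<in> borel_measurable (PiM I (\<lambda>_. U))"
    by (intro measurable_If measurable_const sets_F) auto
  finally show ?thesis .
qed

lemma int_ind: "integral\<^sup>N (PiM I (\<lambda>_. U)) (\<lambda>\<theta>. indicator {\<theta>. x \<in> F \<theta>} \<theta>) = emeasure (PiM I (\<lambda>_. U)) {\<theta> \<in> space (PiM I (\<lambda>_. U)). x \<in> F \<theta>}"
proof -
  have "integral\<^sup>N (PiM I (\<lambda>_. U)) (\<lambda>\<theta>. indicator {\<theta>. x \<in> F \<theta>} \<theta>) =
        integral\<^sup>N (PiM I (\<lambda>_. U)) (indicator {\<theta> \<in> space (PiM I (\<lambda>_. U)). x \<in> F \<theta>})"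
    by (rule nn_integral_cong) (auto simp: indicator_def)
  also have "\<dots> = emeasure (PiM I (\<lambda>_. U)) {\<theta> \<in> space (PiM I (\<lambda>_. U)). x \<in> F \<theta>}"
    by (rule nn_integral_indicator[OF sets_F])
  finally show ?thesis .
qed

lemma emeasure_a: "emeasure MV {\<theta> \<in> space MV. x \<in> F \<theta>} = ennreal (a x)"
  unfolding a_def by (rule finite_measure.emeasure_eq_measure[OF prob_space.finite_measure[OF probMV]])

lemma a_nonneg: "a x \<ge> 0" by (simp add: a_def)

lemma a_u: "a u = 1"
proof -
  have "u \<in> F \<theta>" for \<theta> by (subst char) simp
  then have "{\<theta> \<in> space MV. u \<in> F \<theta>} = space MV" by auto
  then show ?thesis unfolding a_def using prob_space.prob_space[OF probMV] by simp
qed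

lemma U_le: assumes "0 \<le> s" "s \<le> 1" shows "emeasure U {..s} = ennreal s"
proof -
  have "emeasure U {..s} = emeasure lborel ({0..1} \<inter> {..s}) / emeasure lborel {0..1::real}"
    by (rule emeasure_uniform_measure) auto
  also have "{0..1} \<inter> {..s} = {0..s}" using assms by auto
  finally show ?thesis using assms by (simp add: divide_ennreal_def)
qed

lemma a_rec:
  assumes v: "v \<in> V" "v \<noteq> u"
  shows "a v = (\<Sum>x \<in> In_nbrs E v. w (x, v) * a x)"
proof -
  define I where "I = V - {v}"
  have VI: "V = insert v I" "finite I" "v \<notin> I" using v finV by (auto simp: I_def)
  let ?MI = "PiM I (\<lambda>_. U)"
  have MVeq: "MV = PiM (insert v I) (\<lambda>_. U)" using VI(1) by simp
  define s where "s \<theta> = (\<Sum>x \<in> In_nbrs E v \<inter> F \<theta>. w (x, v))" for \<theta>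
  have s01: "0 \<le> s \<theta> \<and> s \<theta> \<le> 1" for \<theta>
  proof
    show "0 \<le> s \<theta>" unfolding s_def by (rule sum_nonneg) (auto simp: In_nbrs_def w_nonneg)
    have "s \<theta> \<le> (\<Sum>x \<in> In_nbrs E v \<inter> V. w (x, v))" unfolding s_def by (rule sum_mono_In) (rule F_V)
    also have "In_nbrs E v \<inter> V = In_nbrs E v" using In_sub by auto
    finally show "s \<theta> \<le> 1" using w_in[OF v(1)] by simp
  qed
  have supd: "s (\<theta>(v := y)) = s \<theta>" for \<theta> y
    unfolding s_def using local_upd by (intro sum.cong) (auto simp: In_nbrs_def)
  have "ennreal (a v) = integral\<^sup>N MV (\<lambda>\<theta>. indicator {\<theta>. v \<in> F \<theta>} \<theta>)"
    using int_ind emeasure_a by simp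
  also have "\<dots> = (\<integral>\<^sup>+ \<theta>. (\<integral>\<^sup>+ y. indicator {\<theta>. v \<in> F \<theta>} (\<theta>(v := y)) \<partial>U) \<partial>?MI)"
    by (subst MVeq) (rule product_sigma_finite.product_nn_integral_insert[OF psU VI(2,3) ind_meas])
  also have "\<dots> = (\<integral>\<^sup>+ \<theta>. ennreal (s \<theta>) \<partial>?MI)"
  proof (rule nn_integral_cong)
    fix \<theta>
    have "(\<lambda>y. indicator {\<theta>. v \<in> F \<theta>} (\<theta>(v := y)) :: ennreal) = indicator {..s \<theta>}"
    proof
      fix y
      have "v \<in> F (\<theta>(v := y)) \<longleftrightarrow> (v = u \<or> (v \<in> V \<and> (\<theta>(v := y)) v \<le> s (\<theta>(v := y))))"
        unfolding s_def by (rule char)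
      then have "v \<in> F (\<theta>(v := y)) \<longleftrightarrow> y \<le> s \<theta>"
        using v supd[of \<theta> y] by simp
      then show "indicator {\<theta>. v \<in> F \<theta>} (\<theta>(v := y)) = (indicator {..s \<theta>} y :: ennreal)"
        by (simp add: indicator_def)
    qed
    then show "(\<integral>\<^sup>+ y. indicator {\<theta>. v \<in> F \<theta>} (\<theta>(v := y)) \<partial>U) = ennreal (s \<theta>)"
      using U_le[of "s \<theta>"] s01[of \<theta>] by simp
  qed
  also have "\<dots> = (\<integral>\<^sup>+ \<theta>. (\<Sum>x \<in> In_nbrs E v. ennreal (w (x, v)) * indicator {\<theta>. x \<in> F \<theta>} \<theta>) \<partial>?MI)"
  proof (rule nn_integral_cong)
    fix \<theta>
    have e: "s \<theta> = (\<Sum>x \<in> In_nbrs E v. w (x, v) * indicator {\<theta>. x \<in> F \<theta>} \<theta>)"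
      unfolding s_def by (simp add: sum.inter_restrict[OF fin_In] indicator_def Int_commute of_bool_def if_distrib cong: if_cong)
    have "ennreal (s \<theta>) = (\<Sum>x \<in> In_nbrs E v. ennreal (w (x, v) * indicator {\<theta>. x \<in> F \<theta>} \<theta>))"
      unfolding e by (rule sum_ennreal[symmetric]) (auto simp: In_nbrs_def w_nonneg)
    then show "ennreal (s \<theta>) = (\<Sum>x \<in> In_nbrs E v. ennreal (w (x, v)) * indicator {\<theta>. x \<in> F \<theta>} \<theta>)"
      by (simp add: indicator_def of_bool_def if_distrib cong: if_cong)
  qed
  also have "\<dots> = (\<Sum>x \<in> In_nbrs E v. ennreal (w (x, v)) * integral\<^sup>N ?MI (\<lambda>\<theta>. indicator {\<theta>. x \<in> F \<theta>} \<theta>))"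
  proof (subst nn_integral_sum)
    fix x
    show "(\<lambda>\<theta>. ennreal (w (x, v)) * indicator {\<theta>. x \<in> F \<theta>} \<theta>) \<in> borel_measurable ?MI"
      by (rule borel_measurable_times_ennreal[OF measurable_const ind_meas]) simp
  next
    show "(\<Sum>x \<in> In_nbrs E v. \<integral>\<^sup>+ \<theta>. ennreal (w (x, v)) * indicator {\<theta>. x \<in> F \<theta>} \<theta> \<partial>?MI) =
      (\<Sum>x \<in> In_nbrs E v. ennreal (w (x, v)) * integral\<^sup>N ?MI (\<lambda>\<theta>. indicator {\<theta>. x \<in> F \<theta>} \<theta>))"
      by (rule sum.cong[OF refl]) (rule nn_integral_cmult[OF ind_meas])
  qed
  also have "\<dots> = (\<Sum>x \<in> In_nbrs E v. ennreal (w (x, v)) * ennreal (a x))"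
  proof (rule sum.cong[OF refl])
    fix x assume x: "x \<in> In_nbrs E v"
    have "integral\<^sup>N ?MI (\<lambda>\<theta>. indicator {\<theta>. x \<in> F \<theta>} \<theta>) = integral\<^sup>N MV (\<lambda>\<theta>. indicator {\<theta>. x \<in> F \<theta>} \<theta>)"
      apply (subst MVeq)
      by (rule nn_insert_indep[symmetric, OF VI(2,3) ind_meas]) (use x local_upd in \<open>auto simp: In_nbrs_def indicator_def\<close>)
    also have "\<dots> = ennreal (a x)" using int_ind emeasure_a by simp
    finally show "ennreal (w (x, v)) * integral\<^sup>N ?MI (\<lambda>\<theta>. indicator {\<theta>. x \<in> F \<theta>} \<theta>) = ennreal (w (x, v)) * ennreal (a x)" by simp
  qed
  also have "\<dots> = ennreal (\<Sum>x \<in> In_nbrs E v. w (x, v) * a x)"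
  proof -
    have "(\<Sum>x \<in> In_nbrs E v. ennreal (w (x, v)) * ennreal (a x)) = (\<Sum>x \<in> In_nbrs E v. ennreal (w (x, v) * a x))"
      by (rule sum.cong[OF refl]) (simp add: ennreal_mult a_nonneg w_nonneg In_nbrs_def)
    also have "\<dots> = ennreal (\<Sum>x \<in> In_nbrs E v. w (x, v) * a x)"
      by (rule sum_ennreal) (simp add: a_nonneg w_nonneg In_nbrs_def)
    finally show ?thesis .
  qed
  finally show ?thesis
    by (rule ennreal_inj[THEN iffD1, rotated 2]) (auto intro!: sum_nonneg simp: a_nonneg In_nbrs_def w_nonneg)
qed

lemma a_N: "v \<in> V \<Longrightarrow> a v = N v"
proof (induction v rule: wf_induct_rule[OF wfE])
  case (1 v)
  show ?case
  proof (cases "v = u")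
    case True then show ?thesis by (simp add: a_u N_u)
  next
    case False
    have "a v = (\<Sum>x \<in> In_nbrs E v. w (x, v) * a x)" using a_rec 1(2) False by simp
    also have "\<dots> = (\<Sum>x \<in> In_nbrs E v. w (x, v) * N x)"
      using 1(1) In_sub by (intro sum.cong) (auto simp: In_nbrs_def)
    also have "\<dots> = N v" using N_rec False by simp
    finally show ?thesis .
  qed
qed

lemma sigma_a: "lt_sigma V E w {u} = (\<Sum>v \<in> V - {u}. a v)"
proof -
  have "lt_sigma V E w {u} = (\<integral>\<theta>. (\<Sum>v \<in> V - {u}. indicator {\<theta> \<in> space MV. v \<in> F \<theta>} \<theta>) \<partial>MV)"
    unfolding lt_sigma_def threshold_space_def
  proof (rule Bochner_Integration.integral_cong[OF refl])
    fix \<theta> assume th: "\<theta> \<in> space MV"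
    have "F \<theta> - {u} = (V - {u}) \<inter> F \<theta>" using F_V by auto
    then have "real (card (F \<theta> - {u})) = (\<Sum>v \<in> V - {u}. indicator (F \<theta>) v)"
    proof -
      have "(\<Sum>v \<in> V - {u}. indicator (F \<theta>) v) = real (card ((V - {u}) \<inter> {x. x \<in> F \<theta>}))"
        using finV by (simp add: indicator_def)
      then show ?thesis using \<open>F \<theta> - {u} = (V - {u}) \<inter> F \<theta>\<close> by simp
    qed
    then show "real (card (F \<theta> - {u})) = (\<Sum>v \<in> V - {u}. indicator {\<theta> \<in> space MV. v \<in> F \<theta>} \<theta>)"
      using th by (simp add: indicator_def)
  qed
  also have "\<dots> = (\<Sum>v \<in> V - {u}. (\<integral>\<theta>. indicator {\<theta> \<in> space MV. v \<in> F \<theta>} \<theta> \<partial>MV))"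
  proof (rule Bochner_Integration.integral_sum)
    fix v
    have "{\<theta> \<in> space MV. v \<in> F \<theta>} \<inter> space MV = {\<theta> \<in> space MV. v \<in> F \<theta>}" by auto
    then show "integrable MV (indicator {\<theta> \<in> space MV. v \<in> F \<theta>} :: _ \<Rightarrow> real)"
      unfolding integrable_indicator_iff using sets_F emeasure_a by simp
  qed
  also have "\<dots> = (\<Sum>v \<in> V - {u}. a v)"
  proof (rule sum.cong[OF refl])
    fix v
    have "{\<theta> \<in> space MV. v \<in> F \<theta>} \<inter> space MV = {\<theta> \<in> space MV. v \<in> F \<theta>}" by auto
    then show "(\<integral>\<theta>. indicator {\<theta> \<in> space MV. v \<in> F \<theta>} \<theta> \<partial>MV) = a v"
      unfolding a_def integral_indicator by simp
  qed
  finally show ?thesis .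
qed

end

theorem mainTheorem7:
  fixes V :: "'a set" and E :: "('a \<times> 'a) set" and w :: "'a \<times> 'a \<Rightarrow> real"
  assumes finV: "finite V"
    and EV: "E \<subseteq> V \<times> V"
    and dag: "acyclic E"
    and w_nonneg: "\<And>e. e \<in> E \<Longrightarrow> w e \<ge> 0"
    and w_in: "\<And>v. v \<in> V \<Longrightarrow> (\<Sum>x \<in> In_nbrs E v. w (x, v)) \<le> 1"
    and l: "l \<ge> longest_path_length E"
    and u: "u \<in> V"
  shows "easyim E w l u = lt_sigma V E w {u}
         \<and> lt_sigma V E w {u} =
             (\<Sum>xs \<in> {xs. dpath E xs \<and> hd xs = u \<and> length xs \<ge> 2}. path_weight w xs)"
proof -
  interpret L: ltm V E w u by (rule ltm.intro[OF finV EV dag w_nonneg w_in u])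
  have q: "L.Q u = {xs. dpath E xs \<and> hd xs = u \<and> length xs \<ge> 2}" by (simp add: L.Q_def)
  have 1: "easyim E w l u = (\<Sum>xs \<in> L.Q u. path_weight w xs)"
    using L.easyim_Qk L.Qk_Q[OF l] by simp
  have "lt_sigma V E w {u} = (\<Sum>v \<in> V - {u}. L.a v)" by (rule L.sigma_a)
  also have "\<dots> = (\<Sum>v \<in> V - {u}. L.N v)" using L.a_N by (intro sum.cong) auto
  also have "\<dots> = (\<Sum>xs \<in> L.Q u. path_weight w xs)" by (rule L.Q_sum[symmetric])
  finally have 2: "lt_sigma V E w {u} = (\<Sum>xs \<in> L.Q u. path_weight w xs)" .
  show ?thesis using 1 2 q by simp
qed

end
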